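(* Let $n$ be a positive integer, $f:\mathbb{Z}_n\to\mathbb C$, $T_f=\max_{A\in\mathcal A_n}|f(A)|$, $m\le n$ a positive integer and $M=\{0,1,\dots,m-1\}\subseteq\mathbb{Z}_n$. Then \[\sum_{a\in\mathbb{Z}_n}\sum_{b\in\mathbb{Z}_n}|f(a+bM)|^2\le n^2T_f^2+\sum_{1\le k<m:\ k\mid n}\frac{m^2\phi(k)}{k}G_f(n/k).\]
   Context: An arithmetic progression in $\mathbb{Z}_n$ is a set $\{a+kd: 0\le k<l\}$ with $a,d\in\mathbb{Z}_n$ and $l$ an integer with $0\le l\le n/\gcd(n,d)$ (with $\gcd(0,n)=n$); $\mathcal A_n$ is the family of all of them. For a set $A$, $f(A)=\sum_{x\in A}f(x)$; for $a,b\in\mathbb{Z}_n$, $f(a+bM)=\sum_{x\in M}f(a+bx)$ (multiset sum). For a positive divisor $r$ of $n$ and $a\in\mathbb{Z}_n$, $g_f(a,r)=\sum_{x\in\mathbb{Z}_n:\,x=a+jr\text{ for some }j\in\mathbb{Z}_n}f(x)$ and $G_f(r)=\sum_{a=0}^{r-1}|g_f(a,r)|^2$. $\phi$ is Euler's totient function. *)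

theory Defs
  imports "HOL-Analysis.Analysis" "HOL-Number_Theory.Number_Theory"
begin

text \<open>Z_n is modelled by the representatives {0..<n} with arithmetic mod n.
  A function f on Z_n is a function nat => complex, only its values on {0..<n} matter.\<close>

definition arith_progs :: "nat \<Rightarrow> nat set set" where
  "arith_progs n = {{(a + k * d) mod n | k. k < l} | a d l.
      a < n \<and> d < n \<and> l \<le> n div gcd n d}"

definition setsum_f :: "(nat \<Rightarrow> complex) \<Rightarrow> nat set \<Rightarrow> complex" where
  "setsum_f f A = (\<Sum>x\<in>A. f x)"

definition T_f :: "nat \<Rightarrow> (nat \<Rightarrow> complex) \<Rightarrow> real" where
  "T_f n f = Max ((\<lambda>A. norm (setsum_f f A)) ` arith_progs n)"

text \<open>f(a + bM) as a multiset sum over M = {0,...,m-1}.\<close>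
definition f_dil :: "nat \<Rightarrow> (nat \<Rightarrow> complex) \<Rightarrow> nat \<Rightarrow> nat \<Rightarrow> nat \<Rightarrow> complex" where
  "f_dil n f m a b = (\<Sum>x<m. f ((a + b * x) mod n))"

definition g_f :: "nat \<Rightarrow> (nat \<Rightarrow> complex) \<Rightarrow> nat \<Rightarrow> nat \<Rightarrow> complex" where
  "g_f n f a r = (\<Sum>x\<in>{x. x < n \<and> (\<exists>j<n. x = (a + j * r) mod n)}. f x)"

definition G_f :: "nat \<Rightarrow> (nat \<Rightarrow> complex) \<Rightarrow> nat \<Rightarrow> real" where
  "G_f n f r = (\<Sum>a<r. (norm (g_f n f a r))^2)"

end

theory Submission
  imports Defs
begin

lemma per_dvd:
  fixes n b :: nat assumes "n > 0"
  shows "n dvd b * (n div gcd n b)"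
proof -
  have "b * (n div gcd n b) = (b div gcd n b) * n"
    by (metis div_mult_swap dvd_div_mult gcd_dvd1 gcd_dvd2 mult.commute)
  thus ?thesis by simp
qed

lemma per_q:
  fixes n b :: nat assumes "n > 0"
  shows "(a + b * (x + q * (n div gcd n b))) mod n = (a + b * x) mod n"
proof -
  obtain c where c: "b * (n div gcd n b) = n * c" using per_dvd[OF assms] by blast
  have "a + b * (x + q * (n div gcd n b)) = (a + b*x) + (q*c) * n"
    using c by (simp add: algebra_simps)
  thus ?thesis by (metis mod_mult_self1)
qed

lemma inj_orbit:
  fixes n b :: nat assumes "n > 0"
  shows "inj_on (\<lambda>x. (a + b * x) mod n) {..<n div gcd n b}"
proof (rule linorder_inj_onI')
  fix x y assume xy: "x \<in> {..<n div gcd n b}" "y \<in> {..<n div gcd n b}" "x < y"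
  show "(a + b * x) mod n \<noteq> (a + b * y) mod n"
  proof
  assume eq: "(a + b * x) mod n = (a + b * y) mod n"
  define d where "d = gcd n b"
  define k where "k = n div d"
  have d0: "d > 0" using assms by (simp add: d_def)
  have nk: "n = k * d" by (simp add: k_def d_def)
  have "n dvd (a + b*y) - (a + b*x)"
    using eq xy by (subst mod_eq_dvd_iff_nat[symmetric]) auto
  hence "n dvd b * (y - x)" by (simp add: diff_mult_distrib2)
  moreover have "b = (b div d) * d" by (simp add: d_def)
  ultimately have "k * d dvd ((b div d) * (y - x)) * d" using nk
    by (metis mult.assoc mult.commute)
  hence "k dvd (b div d) * (y - x)" using d0 by simp
  moreover have "coprime k (b div d)"
    unfolding k_def d_def using assms by (simp add: div_gcd_coprime)
  ultimately have "k dvd y - x" using coprime_dvd_mult_right_iff by blast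
  moreover have "0 < y - x" "y - x < k" using xy by (auto simp: k_def d_def)
  ultimately show False using nat_dvd_not_less by blast
qed
qed

lemma finite_ap: "finite (arith_progs n)"
proof -
  have "arith_progs n \<subseteq> Pow {..<n}" if "n > 0"
    using that unfolding arith_progs_def by auto
  moreover have "arith_progs 0 \<subseteq> {{}}"
    unfolding arith_progs_def by auto
  ultimately show ?thesis
    by (metis finite.emptyI finite.insertI finite_Pow_iff finite_lessThan finite_subset neq0_conv)
qed

lemma ap_bound:
  fixes n a b s :: nat and f :: "nat \<Rightarrow> complex"
  assumes "n > 0" "a < n" "b < n" "s \<le> n div gcd n b"
  shows "norm (\<Sum>x<s. f ((a + b * x) mod n)) \<le> T_f n f"
proof -
  define S where "S = (\<lambda>x. (a + b * x) mod n) ` {..<s}"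
  have inj: "inj_on (\<lambda>x. (a + b * x) mod n) {..<s}"
    using inj_orbit[OF assms(1), of a b] assms(4) by (meson inj_on_subset lessThan_subset_iff)
  have eq: "(\<Sum>x<s. f ((a + b * x) mod n)) = setsum_f f S"
    unfolding setsum_f_def S_def by (simp add: sum.reindex[OF inj])
  have "S = {(a + k * b) mod n | k. k < s}"
    unfolding S_def by (auto simp: mult.commute)
  hence "S \<in> arith_progs n" unfolding arith_progs_def using assms by blast
  hence "norm (setsum_f f S) \<le> T_f n f"
    unfolding T_f_def by (intro Max_ge) (auto simp: finite_ap)
  thus ?thesis using eq by simp
qed

lemma coset_eq:
  fixes n d r :: nat
  assumes "n > 0" "d dvd n" "r < d"
  shows "{y. y < n \<and> y mod d = r} = (\<lambda>j. r + j * d) ` {..<n div d}"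
proof (intro equalityI subsetI)
  fix y assume y: "y \<in> {y. y < n \<and> y mod d = r}"
  have d0: "d > 0" using assms by auto
  have "y = r + (y div d) * d" using y div_mult_mod_eq[of y d] by (simp only: mem_Collect_eq)
  moreover have "y div d < n div d"
    using y assms d0 by (metis dvd_div_mult_self less_mult_imp_div_less mem_Collect_eq)
  ultimately show "y \<in> (\<lambda>j. r + j * d) ` {..<n div d}" by blast
next
  fix y assume "y \<in> (\<lambda>j. r + j * d) ` {..<n div d}"
  then obtain j where j: "j < n div d" "y = r + j * d" by auto
  have "Suc j \<le> n div d" using j by simp
  hence "Suc j * d \<le> n div d * d" by (rule mult_le_mono1)
  also have "\<dots> = n" using assms by simp
  finally have "r + j * d < n" using assms by simp
  moreover have "(r + j * d) mod d = r" using assms by simp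
  ultimately show "y \<in> {y. y < n \<and> y mod d = r}" using j by simp
qed

lemma gf_set:
  fixes n d r :: nat
  assumes "n > 0" "d dvd n" "r < d"
  shows "{x. x < n \<and> (\<exists>j<n. x = (r + j * d) mod n)} = {y. y < n \<and> y mod d = r}"
proof (intro equalityI subsetI)
  fix x assume "x \<in> {x. x < n \<and> (\<exists>j<n. x = (r + j * d) mod n)}"
  then obtain j where j: "x < n" "x = (r + j * d) mod n" by auto
  have "x mod d = (r + j * d) mod d" using j assms by (simp add: mod_mod_cancel)
  thus "x \<in> {y. y < n \<and> y mod d = r}" using j assms by simp
next
  fix y assume y: "y \<in> {y. y < n \<and> y mod d = r}"
  have d0: "d > 0" using assms by auto
  have e: "y = r + (y div d) * d" using y div_mult_mod_eq[of y d] by (simp only: mem_Collect_eq)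
  have "y div d < n"
  proof -
    have "y div d \<le> y" by (rule div_le_dividend)
    moreover have "y < n" using y by simp
    ultimately show ?thesis by linarith
  qed
  moreover have "y = (r + (y div d) * d) mod n"
  proof -
    have yn: "y < n" using y by simp
    have "(r + (y div d) * d) mod n = y mod n" by (simp only: e[symmetric])
    thus ?thesis using yn by simp
  qed
  ultimately show "y \<in> {x. x < n \<and> (\<exists>j<n. x = (r + j * d) mod n)}" using y by blast
qed

lemma orbit_sum:
  fixes n a b :: nat and f :: "nat \<Rightarrow> complex"
  assumes "n > 0"
  shows "(\<Sum>x<n div gcd n b. f ((a + b * x) mod n)) = g_f n f (a mod gcd n b) (gcd n b)"
proof -
  define d where "d = gcd n b"
  define r where "r = a mod d"
  define S where "S = {y. y < n \<and> y mod d = r}"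
  have d0: "d > 0" using assms by (simp add: d_def)
  have dn: "d dvd n" by (simp add: d_def)
  have db: "d dvd b" by (simp add: d_def)
  have r: "r < d" using d0 by (simp add: r_def)
  have inj: "inj_on (\<lambda>x. (a + b * x) mod n) {..<n div d}"
    using inj_orbit[OF assms] by (simp add: d_def)
  have sub: "(\<lambda>x. (a + b * x) mod n) ` {..<n div d} \<subseteq> S"
  proof
    fix y assume "y \<in> (\<lambda>x. (a + b * x) mod n) ` {..<n div d}"
    then obtain x where y: "y = (a + b * x) mod n" by auto
    obtain e where e: "b = d * e" using db by blast
    have "y mod d = (a + d * (e * x)) mod d" using y e dn by (simp add: mod_mod_cancel mult.assoc)
    also have "\<dots> = r" by (simp add: r_def)
    finally show "y \<in> S" using y assms by (simp add: S_def)
  qed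
  have cS: "card S = n div d"
  proof -
    have "S = (\<lambda>j. r + j * d) ` {..<n div d}" unfolding S_def using coset_eq[OF assms dn r] .
    moreover have "inj_on (\<lambda>j. r + j * d) {..<n div d}" using d0 by (auto simp: inj_on_def)
    ultimately show ?thesis by (simp add: card_image)
  qed
  have "(\<lambda>x. (a + b * x) mod n) ` {..<n div d} = S"
    using sub cS inj by (intro card_subset_eq) (auto simp: S_def card_image)
  hence "(\<Sum>x<n div d. f ((a + b * x) mod n)) = (\<Sum>y\<in>S. f y)"
    using sum.reindex[OF inj, of f] by simp
  also have "\<dots> = g_f n f r d"
    unfolding g_f_def S_def using gf_set[OF assms dn r] by simp
  finally show ?thesis by (simp add: d_def r_def)
qed

lemma sum_mod_rep:
  fixes \<phi> :: "nat \<Rightarrow> real" and d c :: nat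
  shows "(\<Sum>a<d * c. \<phi> (a mod d)) = real c * (\<Sum>r<d. \<phi> r)"
proof (induction c)
  case 0 thus ?case by simp
next
  case (Suc c)
  have "(\<Sum>a<d * Suc c. \<phi> (a mod d)) = (\<Sum>a\<in>{0..<d*c}. \<phi> (a mod d)) + (\<Sum>a\<in>{d*c..<d*c+d}. \<phi> (a mod d))"
    by (simp add: lessThan_atLeast0 sum.atLeastLessThan_concat add.commute)
  also have "(\<Sum>a\<in>{d*c..<d*c+d}. \<phi> (a mod d)) = (\<Sum>r\<in>{0..<d}. \<phi> ((r + d*c) mod d))"
    using sum.shift_bounds_nat_ivl[of "\<lambda>a. \<phi> (a mod d)" 0 "d*c" d] by (simp add: add.commute)
  also have "\<dots> = (\<Sum>r<d. \<phi> r)" by (simp add: lessThan_atLeast0)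
  finally show ?case using Suc by (simp add: lessThan_atLeast0 algebra_simps)
qed

lemma shift_sum:
  fixes \<phi> :: "nat \<Rightarrow> 'a::comm_monoid_add" and n c :: nat
  assumes "n > 0"
  shows "(\<Sum>a<n. \<phi> ((a + c) mod n)) = (\<Sum>a<n. \<phi> a)"
proof -
  have inj: "inj_on (\<lambda>a. (a + c) mod n) {..<n}"
  proof (rule inj_onI)
    fix x y assume "x \<in> {..<n}" "y \<in> {..<n}" "(x + c) mod n = (y + c) mod n"
    thus "x = y" by (metis lessThan_iff mod_less cong_def cong_add_rcancel_nat)
  qed
  have "(\<lambda>a. (a + c) mod n) ` {..<n} = {..<n}"
    using inj assms by (intro endo_inj_surj) auto
  hence "bij_betw (\<lambda>a. (a + c) mod n) {..<n} {..<n}" using inj by (simp add: bij_betw_def)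
  thus ?thesis by (rule sum.reindex_bij_betw)
qed

lemma sum_periodic:
  fixes \<phi> :: "nat \<Rightarrow> complex" and k q :: nat
  assumes "\<And>x. \<phi> (x + k) = \<phi> x"
  shows "(\<Sum>x<q * k. \<phi> x) = of_nat q * (\<Sum>x<k. \<phi> x)"
proof (induction q)
  case 0 thus ?case by simp
next
  case (Suc q)
  have per: "\<phi> (x + j * k) = \<phi> x" for x j
  proof (induction j)
    case 0 thus ?case by simp
  next
    case (Suc j)
    have "x + Suc j * k = (x + j * k) + k" by simp
    hence "\<phi> (x + Suc j * k) = \<phi> ((x + j * k) + k)" by (simp only:)
    also have "\<dots> = \<phi> x" using assms[of "x + j * k"] Suc by simp
    finally show ?case .
  qed
  have "(\<Sum>x<Suc q * k. \<phi> x) = (\<Sum>x\<in>{0..<q*k}. \<phi> x) + (\<Sum>x\<in>{q*k..<q*k+k}. \<phi> x)"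
    by (simp add: lessThan_atLeast0 sum.atLeastLessThan_concat add.commute)
  also have "(\<Sum>x\<in>{q*k..<q*k+k}. \<phi> x) = (\<Sum>r\<in>{0..<k}. \<phi> (r + q*k))"
    using sum.shift_bounds_nat_ivl[of \<phi> 0 "q*k" k] by (simp add: add.commute)
  also have "\<dots> = (\<Sum>r<k. \<phi> r)" by (simp add: lessThan_atLeast0 per)
  finally show ?case using Suc by (simp add: lessThan_atLeast0 algebra_simps)
qed

lemma norm_add_sq:
  fixes z w :: complex
  shows "(norm (z + w))^2 = (norm z)^2 + 2 * Re (z * cnj w) + (norm w)^2"
  unfolding cmod_power2 by (simp add: power2_eq_square algebra_simps)

lemma per_b:
  fixes n m b :: nat and f :: "nat \<Rightarrow> complex"
  assumes n0: "n > 0" and m0: "m > 0" and mn: "m \<le> n" and bn: "b < n"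
  shows "(\<Sum>a<n. (norm (f_dil n f m a b))^2) \<le> real n * (T_f n f)^2
     + (if n div gcd n b < m then real m ^ 2 / real (n div gcd n b) * G_f n f (gcd n b) else 0)"
proof (cases "n div gcd n b < m")
  case False
  have "(norm (f_dil n f m a b))^2 \<le> (T_f n f)^2" if "a < n" for a
  proof -
    have "norm (f_dil n f m a b) \<le> T_f n f"
      unfolding f_dil_def using ap_bound[OF n0 that bn, where s=m and f=f] False by simp
    thus ?thesis by (meson norm_ge_zero power_mono)
  qed
  hence "(\<Sum>a<n. (norm (f_dil n f m a b))^2) \<le> (\<Sum>a<n. (T_f n f)^2)"
    by (intro sum_mono) auto
  thus ?thesis using False by simp
next
  case True
  define d where "d = gcd n b"
  define k where "k = n div d"
  define q where "q = m div k"
  define s where "s = m mod k"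
  define T where "T = T_f n f"
  define G where "G = G_f n f d"
  define h where "h = (\<lambda>a. g_f n f (a mod d) d)"
  define P where "P = (\<lambda>a. \<Sum>x<s. f ((a + b * x) mod n))"
  define C where "C = (\<Sum>a<n. h a * cnj (f a))"
  have d0: "d > 0" using n0 by (simp add: d_def)
  have dn: "d dvd n" by (simp add: d_def)
  have db: "d dvd b" by (simp add: d_def)
  have nk: "n = d * k" using dn by (simp add: k_def)
  have k0: "k > 0" using nk n0 by (cases k) auto
  have km: "k < m" using True by (simp add: k_def d_def)
  have sk: "s < k" using k0 by (simp add: s_def)
  have mqs: "m = q * k + s" by (simp add: q_def s_def)
  have hshift: "h ((a + b * x) mod n) = h a" for a x
  proof -
    obtain e where e: "b = d * e" using db by blast
    have "((a + b * x) mod n) mod d = (a + d * (e * x)) mod d" using e dn by (simp add: mod_mod_cancel mult.assoc)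
    also have "\<dots> = a mod d" by simp
    finally show ?thesis by (simp add: h_def)
  qed
  have perk: "(a + b * (x + j * k)) mod n = (a + b * x) mod n" for a x j
    using per_q[OF n0, where a=a and b=b and x=x and q=j] by (simp add: k_def d_def)
  have orbit: "(\<Sum>x<k. f ((a + b * x) mod n)) = h a" for a
    using orbit_sum[OF n0, where b=b and f=f and a=a] by (simp add: h_def k_def d_def)
  have decomp: "f_dil n f m a b = of_nat q * h a + P a" for a
  proof -
    have "f_dil n f m a b = (\<Sum>x\<in>{0..<q*k}. f ((a + b * x) mod n)) + (\<Sum>x\<in>{q*k..<q*k+s}. f ((a + b * x) mod n))"
      unfolding f_dil_def mqs by (simp add: lessThan_atLeast0 sum.atLeastLessThan_concat)
    also have "(\<Sum>x\<in>{0..<q*k}. f ((a + b * x) mod n)) = of_nat q * h a"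
      using sum_periodic[where \<phi>="\<lambda>x. f ((a + b * x) mod n)" and k=k and q=q] perk[of a _ 1] orbit[of a]
      by (simp add: lessThan_atLeast0)
    also have "(\<Sum>x\<in>{q*k..<q*k+s}. f ((a + b * x) mod n)) = (\<Sum>x\<in>{0..<s}. f ((a + b * (x + q*k)) mod n))"
      using sum.shift_bounds_nat_ivl[of "\<lambda>x. f ((a + b * x) mod n)" 0 "q*k" s] by (simp add: add.commute)
    also have "\<dots> = P a" by (simp add: P_def perk lessThan_atLeast0)
    finally show ?thesis .
  qed
  have corr: "(\<Sum>a<n. h a * cnj (f ((a + b * x) mod n))) = C" for x
  proof -
    have "(\<Sum>a<n. h a * cnj (f ((a + b * x) mod n))) = (\<Sum>a<n. h ((a + b * x) mod n) * cnj (f ((a + b * x) mod n)))"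
      by (simp add: hshift)
    also have "\<dots> = C" unfolding C_def
      using shift_sum[OF n0, where \<phi>="\<lambda>a. h a * cnj (f a)" and c="b * x"] by simp
    finally show ?thesis .
  qed
  have hP: "(\<Sum>a<n. h a * cnj (P a)) = of_nat s * C"
  proof -
    have "(\<Sum>a<n. h a * cnj (P a)) = (\<Sum>a<n. \<Sum>x<s. h a * cnj (f ((a + b * x) mod n)))"
      by (simp add: P_def sum_distrib_left)
    also have "\<dots> = (\<Sum>x<s. \<Sum>a<n. h a * cnj (f ((a + b * x) mod n)))" by (rule sum.swap)
    also have "\<dots> = of_nat s * C" by (simp add: corr)
    finally show ?thesis .
  qed
  have hh1: "(\<Sum>a<n. h a * cnj (h a)) = of_nat k * C"
  proof -
    have e: "h a * cnj (h a) = (\<Sum>x<k. h a * cnj (f ((a + b * x) mod n)))" for a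
    proof -
      have "h a * cnj (h a) = h a * cnj (\<Sum>x<k. f ((a + b * x) mod n))" by (simp only: orbit)
      also have "\<dots> = (\<Sum>x<k. h a * cnj (f ((a + b * x) mod n)))"
        by (simp only: cnj_sum sum_distrib_left)
      finally show ?thesis .
    qed
    have "(\<Sum>a<n. h a * cnj (h a)) = (\<Sum>a<n. \<Sum>x<k. h a * cnj (f ((a + b * x) mod n)))"
      by (simp only: e)
    also have "\<dots> = (\<Sum>x<k. \<Sum>a<n. h a * cnj (f ((a + b * x) mod n)))" by (rule sum.swap)
    also have "\<dots> = of_nat k * C" by (simp add: corr)
    finally show ?thesis .
  qed
  have hh2: "(\<Sum>a<n. (norm (h a))^2) = real k * G"
    unfolding G_def G_f_def h_def nk
    using sum_mod_rep[where \<phi>="\<lambda>r. (norm (g_f (d * k) f r d))^2" and d=d and c=k] by simp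
  have hh3: "(\<Sum>a<n. h a * cnj (h a)) = of_real (\<Sum>a<n. (norm (h a))^2)"
  proof -
    have "(\<Sum>a<n. h a * cnj (h a)) = (\<Sum>a<n. of_real ((norm (h a))^2))"
      by (simp only: complex_norm_square)
    also have "\<dots> = of_real (\<Sum>a<n. (norm (h a))^2)" by (simp only: of_real_sum)
    finally show ?thesis .
  qed
  have CG: "C = of_real G"
  proof -
    have "of_nat k * C = (\<Sum>a<n. h a * cnj (h a))" using hh1 by (simp only:)
    also have "\<dots> = of_real (real k * G)" by (simp only: hh3 hh2)
    also have "\<dots> = of_nat k * (of_real G :: complex)" by simp
    finally have "of_nat k * C = of_nat k * (of_real G :: complex)" .
    thus ?thesis using k0 by simp
  qed
  have G0: "G \<ge> 0" unfolding G_def G_f_def by (intro sum_nonneg) auto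
  have Pb: "(norm (P a))^2 \<le> T^2" if "a < n" for a
  proof -
    have "norm (P a) \<le> T"
      unfolding P_def T_def using ap_bound[OF n0 that bn, where s=s and f=f] sk by (simp add: k_def d_def)
    thus ?thesis by (meson norm_ge_zero power_mono)
  qed
  have "(\<Sum>a<n. (norm (f_dil n f m a b))^2)
      = (\<Sum>a<n. real q ^ 2 * (norm (h a))^2 + 2 * real q * Re (h a * cnj (P a)) + (norm (P a))^2)"
  proof (intro sum.cong refl)
    fix a
    have "(norm (f_dil n f m a b))^2 = (norm (of_nat q * h a + P a))^2" by (simp only: decomp)
    also have "\<dots> = (norm (of_nat q * h a))^2 + 2 * Re (of_nat q * h a * cnj (P a)) + (norm (P a))^2"
      by (rule norm_add_sq)
    also have "(norm (of_nat q * h a))^2 = real q ^ 2 * (norm (h a))^2"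
      by (simp only: norm_mult norm_of_nat power_mult_distrib)
    also have "Re (of_nat q * h a * cnj (P a)) = real q * Re (h a * cnj (P a))"
      by (simp add: mult.assoc)
    finally show "(norm (f_dil n f m a b))^2 = real q ^ 2 * (norm (h a))^2 + 2 * real q * Re (h a * cnj (P a)) + (norm (P a))^2"
      by (simp only: mult.assoc)
  qed
  also have "\<dots> = real q ^ 2 * (\<Sum>a<n. (norm (h a))^2) + 2 * real q * Re (\<Sum>a<n. h a * cnj (P a)) + (\<Sum>a<n. (norm (P a))^2)"
    by (simp only: sum.distrib sum_distrib_left Re_sum)
  also have "\<dots> = (real q ^ 2 * real k + 2 * real q * real s) * G + (\<Sum>a<n. (norm (P a))^2)"
  proof -
    have R: "Re (\<Sum>a<n. h a * cnj (P a)) = real s * G" by (simp add: hP CG)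
    show ?thesis unfolding hh2 R by (simp add: algebra_simps)
  qed
  also have "\<dots> \<le> real m ^ 2 / real k * G + real n * T^2"
  proof (intro add_mono)
    have "real k * (real q ^ 2 * real k + 2 * real q * real s) \<le> (real q * real k + real s)^2"
      by (simp add: power2_eq_square algebra_simps)
    moreover have km': "real m ^ 2 = (real q * real k + real s)^2" using mqs by simp
    moreover have kpos: "real k > 0" using k0 by simp
    ultimately have "real q ^ 2 * real k + 2 * real q * real s \<le> real m ^ 2 / real k"
      by (simp add: pos_le_divide_eq mult.commute)
    thus "(real q ^ 2 * real k + 2 * real q * real s) * G \<le> real m ^ 2 / real k * G"
      using G0 by (rule mult_right_mono)
    show "(\<Sum>a<n. (norm (P a))^2) \<le> real n * T^2"
      using sum_mono[of "{..<n}" "\<lambda>a. (norm (P a))^2" "\<lambda>a. T^2"] Pb by simp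
  qed
  finally have "(\<Sum>a<n. (norm (f_dil n f m a b))^2) \<le> real m ^ 2 / real k * G + real n * T^2" .
  thus ?thesis unfolding if_P[OF True] T_def G_def k_def d_def by linarith
qed

lemma div_div_self:
  fixes n d :: nat assumes "d dvd n" "n > 0"
  shows "n div (n div d) = d"
proof -
  obtain e where e: "n = d * e" using assms(1) by blast
  have "d > 0" "e > 0" using assms e by auto
  thus ?thesis using e by simp
qed

lemma sum_shift_0n:
  fixes \<psi> :: "nat \<Rightarrow> real" and n :: nat assumes "n > 0"
  shows "(\<Sum>b<n. \<psi> (gcd n b)) = (\<Sum>b\<in>{0<..n}. \<psi> (gcd b n))"
proof -
  have A: "{..<n} = insert 0 {0<..<n}" using assms by auto
  have B: "{0<..n} = insert n {0<..<n}" using assms by auto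
  have "(\<Sum>b<n. \<psi> (gcd n b)) = \<psi> n + (\<Sum>b\<in>{0<..<n}. \<psi> (gcd n b))"
    unfolding A by (subst sum.insert) auto
  also have "\<dots> = (\<Sum>b\<in>{0<..n}. \<psi> (gcd b n))"
    unfolding B by (subst sum.insert) (auto simp: gcd.commute)
  finally show ?thesis .
qed

theorem lemma4p3:
  fixes n m :: nat and f :: "nat \<Rightarrow> complex"
  assumes "n > 0" and "m > 0" and "m \<le> n"
  shows "(\<Sum>a<n. \<Sum>b<n. (norm (f_dil n f m a b))^2)
         \<le> real n ^ 2 * (T_f n f)^2
           + (\<Sum>k\<in>{k. 1 \<le> k \<and> k < m \<and> k dvd n}.
                real m ^ 2 * real (totient k) / real k * G_f n f (n div k))"
proof -
  define T where "T = T_f n f"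
  define \<psi> where "\<psi> = (\<lambda>k. if k < m then real m ^ 2 / real k * G_f n f (n div k) else 0)"
  define D where "D = {k::nat. k dvd n}"
  have fD: "finite D" unfolding D_def using assms(1) by (simp add: finite_divisors_nat)
  have E: "(if n div gcd n b < m then real m ^ 2 / real (n div gcd n b) * G_f n f (gcd n b) else 0)
      = \<psi> (n div gcd n b)" for b
    unfolding \<psi>_def using div_div_self[of "gcd n b" n] assms(1) by simp
  have "(\<Sum>a<n. \<Sum>b<n. (norm (f_dil n f m a b))^2) = (\<Sum>b<n. \<Sum>a<n. (norm (f_dil n f m a b))^2)"
    by (rule sum.swap)
  also have "\<dots> \<le> (\<Sum>b<n. real n * T^2 + \<psi> (n div gcd n b))"
    using per_b[OF assms, where f=f] E unfolding T_def by (intro sum_mono) simp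
  also have "\<dots> = real n ^ 2 * T^2 + (\<Sum>b<n. \<psi> (n div gcd n b))"
    by (simp add: sum.distrib power2_eq_square)
  also have "(\<Sum>b<n. \<psi> (n div gcd n b)) = (\<Sum>b\<in>{0<..n}. \<psi> (n div gcd b n))"
    using sum_shift_0n[OF assms(1), where \<psi>="\<lambda>g. \<psi> (n div g)"] by simp
  also have "\<dots> = (\<Sum>k\<in>D. \<Sum>b\<in>{b. b \<in> {0<..n} \<and> n div gcd b n = k}. \<psi> (n div gcd b n))"
  proof (rule sum.group[symmetric])
    show "finite {0<..n}" by simp
    show "finite D" by (rule fD)
    show "(\<lambda>b. n div gcd b n) ` {0<..n} \<subseteq> D"
      unfolding D_def using assms(1) by (auto simp: div_dvd_iff_mult)
  qed
  also have "\<dots> = (\<Sum>k\<in>D. real (totient k) * \<psi> k)"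
  proof (rule sum.cong[OF refl])
    fix k assume k: "k \<in> D"
    have kn: "k dvd n" using k by (simp add: D_def)
    have ndk: "n div k dvd n" using kn by (metis dvd_div_mult_self dvd_triv_left)
    have "{b. b \<in> {0<..n} \<and> n div gcd b n = k} = {b\<in>{0<..n}. gcd b n = n div k}"
    proof (intro Collect_cong conj_cong refl iffI)
      fix b assume "n div gcd b n = k"
      thus "gcd b n = n div k" using div_div_self[of "gcd b n" n] assms(1) by simp
    next
      fix b assume "gcd b n = n div k"
      thus "n div gcd b n = k" using div_div_self[OF kn assms(1)] by simp
    qed
    moreover have "card {b\<in>{0<..n}. gcd b n = n div k} = totient k"
      using card_gcd_eq_totient[OF assms(1), of "n div k"] div_div_self[OF kn assms(1)]
      by (simp add: ndk)
    ultimately show "(\<Sum>b\<in>{b. b \<in> {0<..n} \<and> n div gcd b n = k}. \<psi> (n div gcd b n)) = real (totient k) * \<psi> k"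
      using div_div_self[OF kn assms(1)] by simp
  qed
  also have "\<dots> = (\<Sum>k\<in>D. if k < m then real m ^ 2 * real (totient k) / real k * G_f n f (n div k) else 0)"
    unfolding \<psi>_def by (intro sum.cong refl) simp
  also have "\<dots> = (\<Sum>k\<in>{k\<in>D. k < m}. real m ^ 2 * real (totient k) / real k * G_f n f (n div k))"
    by (rule sum.inter_filter[OF fD, symmetric])
  also have "{k\<in>D. k < m} = {k. 1 \<le> k \<and> k < m \<and> k dvd n}"
    unfolding D_def using assms(1) by (auto intro: Suc_leI dvd_pos_nat)
  finally show ?thesis unfolding T_def by simp
qed

end
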